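(* Consider the partial differential equation $$u_t = f(u) + \frac{1}{x}\bigl(x\, g(u)\, u_x\bigr)_x$$ for $u=u(x,t)$, where $f$ is a smooth function that is not identically zero, and $g(u)=k_1 e^{k_2 u}$ with real constants $k_1\neq 0$, $k_2\neq 0$. Then the equation admits a Lie point symmetry other than (constant multiples of) $X=\frac{\partial}{\partial t}$ if and only if $f$ is of one of the following three types, in which case the equation admits the listed symmetries: (a) If $f(u)=k_3 e^{k_4 u}$ with $k_3\neq 0$, $k_4\neq 0$, then the equation has the symmetries $$X_1=\frac{\partial}{\partial t},\qquad X_2=(k_4-k_2)x\frac{\partial}{\partial x}+2k_4 t\frac{\partial}{\partial t}-2\frac{\partial}{\partial u}.$$ (b) If $f(u)=k_3 e^{k_2 u}+k_5$ with $k_3\neq 0$, $k_5\neq 0$, then the equation has the symmetries $$X_1=\frac{\partial}{\partial t},\qquad X_2=e^{-k_2k_5 t}\frac{\partial}{\partial t}+k_5 e^{-k_2k_5 t}\frac{\partial}{\partial u}.$$ (c) If $f(u)=k_5$ with $k_5\neq 0$, then the equation has the symmetries $$X_1=\frac{\partial}{\partial t},\qquad X_2=e^{-k_2k_5 t}\frac{\partial}{\partial t}+k_5 e^{-k_2k_5 t}\frac{\partial}{\partial u},\qquad X_3=k_2 x\frac{\partial}{\partial x}+2\frac{\partial}{\partial u}.$$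
   Context: A Lie point symmetry of the equation is a vector field $X=\xi(t,x,u)\frac{\partial}{\partial x}+\tau(t,x,u)\frac{\partial}{\partial t}+\eta(t,x,u)\frac{\partial}{\partial u}$ whose second prolongation annihilates $u_t-f(u)-\frac{1}{x}(x g(u)u_x)_x$ on the solution set of the equation (the standard infinitesimal invariance criterion). The equation is a generalized Fisher equation written in cylindrical coordinates, with $x$ the radial variable. For arbitrary $f,g$ the field $\frac{\partial}{\partial t}$ is always a symmetry. *)

theory Defs
  imports "HOL-Analysis.Analysis"
begin

text \<open>Coefficient functions of a vector field
  X = xi(x,t,u) d/dx + tau(x,t,u) d/dt + eta(x,t,u) d/du
  are functions of three real arguments, in the order x, t, u.
  The domain is the half space x > 0 (x is the radial variable).\<close>

type_synonym fun3 = "real \<Rightarrow> real \<Rightarrow> real \<Rightarrow> real"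

definition pDx :: "fun3 \<Rightarrow> fun3" where
  "pDx F = (\<lambda>x t u. deriv (\<lambda>s. F s t u) x)"
definition pDt :: "fun3 \<Rightarrow> fun3" where
  "pDt F = (\<lambda>x t u. deriv (\<lambda>s. F x s u) t)"
definition pDu :: "fun3 \<Rightarrow> fun3" where
  "pDu F = (\<lambda>x t u. deriv (\<lambda>s. F x t s) u)"

datatype dir = DX | DT | DU

fun pD :: "dir \<Rightarrow> fun3 \<Rightarrow> fun3" where
  "pD DX F = pDx F" | "pD DT F = pDt F" | "pD DU F = pDu F"

fun iter_pD :: "dir list \<Rightarrow> fun3 \<Rightarrow> fun3" where
  "iter_pD [] F = F"
| "iter_pD (d # ds) F = pD d (iter_pD ds F)"

definition smooth3 :: "fun3 \<Rightarrow> bool" where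
  "smooth3 F \<longleftrightarrow> (\<forall>ds. let G = iter_pD ds F in
      continuous_on {p :: real \<times> real \<times> real. fst p > 0} (\<lambda>(x, t, u). G x t u) \<and>
      (\<forall>x t u. x > 0 \<longrightarrow>
          (\<lambda>s. G s t u) differentiable (at x) \<and>
          (\<lambda>s. G x s u) differentiable (at t) \<and>
          (\<lambda>s. G x t s) differentiable (at u)))"

definition smooth1 :: "(real \<Rightarrow> real) \<Rightarrow> bool" where
  "smooth1 f \<longleftrightarrow> (\<forall>n x. ((deriv ^^ n) f) differentiable (at x))"

text \<open>Second prolongation coefficients (Olver, Applications of Lie Groups to DEs,
  formulas for two independent variables x, t and one dependent variable u),
  evaluated at a jet point (x,t,u,u_x,u_t,u_xx,u_xt).\<close>
definition eta_x :: "fun3 \<Rightarrow> fun3 \<Rightarrow> fun3 \<Rightarrow>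
    real \<Rightarrow> real \<Rightarrow> real \<Rightarrow> real \<Rightarrow> real \<Rightarrow> real" where
  "eta_x xi tau eta x t u ux ut =
     pDx eta x t u + (pDu eta x t u - pDx xi x t u) * ux - pDx tau x t u * ut
     - pDu xi x t u * ux^2 - pDu tau x t u * ux * ut"

definition eta_t :: "fun3 \<Rightarrow> fun3 \<Rightarrow> fun3 \<Rightarrow>
    real \<Rightarrow> real \<Rightarrow> real \<Rightarrow> real \<Rightarrow> real \<Rightarrow> real" where
  "eta_t xi tau eta x t u ux ut =
     pDt eta x t u - pDt xi x t u * ux + (pDu eta x t u - pDt tau x t u) * ut
     - pDu xi x t u * ux * ut - pDu tau x t u * ut^2"

definition eta_xx :: "fun3 \<Rightarrow> fun3 \<Rightarrow> fun3 \<Rightarrow>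
    real \<Rightarrow> real \<Rightarrow> real \<Rightarrow> real \<Rightarrow> real \<Rightarrow> real \<Rightarrow> real \<Rightarrow> real" where
  "eta_xx xi tau eta x t u ux ut uxx uxt =
     pDx (pDx eta) x t u
     + (2 * pDu (pDx eta) x t u - pDx (pDx xi) x t u) * ux
     - pDx (pDx tau) x t u * ut
     + (pDu (pDu eta) x t u - 2 * pDu (pDx xi) x t u) * ux^2
     - 2 * pDu (pDx tau) x t u * ux * ut
     - pDu (pDu xi) x t u * ux^3
     - pDu (pDu tau) x t u * ux^2 * ut
     + (pDu eta x t u - 2 * pDx xi x t u) * uxx
     - 2 * pDx tau x t u * uxt
     - 3 * pDu xi x t u * ux * uxx
     - pDu tau x t u * ut * uxx
     - 2 * pDu tau x t u * ux * uxt"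

text \<open>A second order evolution-type equation E(x,t,u,u_x,u_t,u_xx) = 0 (not depending
  on u_xt, u_tt). Second prolongation of X applied to E, at a jet point.\<close>
type_synonym eqn = "real \<Rightarrow> real \<Rightarrow> real \<Rightarrow> real \<Rightarrow> real \<Rightarrow> real \<Rightarrow> real"

definition pr2 :: "eqn \<Rightarrow> fun3 \<Rightarrow> fun3 \<Rightarrow> fun3 \<Rightarrow>
    real \<Rightarrow> real \<Rightarrow> real \<Rightarrow> real \<Rightarrow> real \<Rightarrow> real \<Rightarrow> real \<Rightarrow> real" where
  "pr2 E xi tau eta x t u ux ut uxx uxt =
       xi x t u * deriv (\<lambda>s. E s t u ux ut uxx) x
     + tau x t u * deriv (\<lambda>s. E x s u ux ut uxx) t
     + eta x t u * deriv (\<lambda>s. E x t s ux ut uxx) u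
     + eta_x xi tau eta x t u ux ut * deriv (\<lambda>s. E x t u s ut uxx) ux
     + eta_t xi tau eta x t u ux ut * deriv (\<lambda>s. E x t u ux s uxx) ut
     + eta_xx xi tau eta x t u ux ut uxx uxt * deriv (\<lambda>s. E x t u ux ut s) uxx"

definition lie_point_symmetry :: "eqn \<Rightarrow> fun3 \<Rightarrow> fun3 \<Rightarrow> fun3 \<Rightarrow> bool" where
  "lie_point_symmetry E xi tau eta \<longleftrightarrow>
     smooth3 xi \<and> smooth3 tau \<and> smooth3 eta \<and>
     (\<forall>x t u ux ut uxx uxt. x > 0 \<longrightarrow> E x t u ux ut uxx = 0 \<longrightarrow>
        pr2 E xi tau eta x t u ux ut uxx uxt = 0)"

text \<open>The generalized Fisher equation in cylindrical coordinates,
  u_t - f(u) - (1/x) (x g(u) u_x)_x = 0, written on the jet space: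
  (1/x)(x g(u) u_x)_x = g(u) u_xx + g'(u) u_x^2 + g(u) u_x / x.\<close>
definition fisher_cyl :: "(real \<Rightarrow> real) \<Rightarrow> (real \<Rightarrow> real) \<Rightarrow> eqn" where
  "fisher_cyl f g = (\<lambda>x t u ux ut uxx.
      ut - f u - (g u * uxx + deriv g u * ux^2 + g u * ux / x))"

end

theory Submission
  imports Defs
begin

lemma dg: "deriv (\<lambda>u. k1 * exp (k2 * u)) = (\<lambda>u. k1 * k2 * exp (k2 * u::real))"
  by (rule ext, rule DERIV_imp_deriv) (auto intro!: derivative_eq_intros)

lemma ddg: "deriv (\<lambda>u. k1 * k2 * exp (k2 * u)) = (\<lambda>u. k1 * k2 * k2 * exp (k2 * u::real))"
  by (rule ext, rule DERIV_imp_deriv) (auto intro!: derivative_eq_intros)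

lemma pr2_fisher:
  fixes x :: real
  assumes x: "x > 0" and fd: "f differentiable (at u)"
  shows "pr2 (fisher_cyl f (\<lambda>u. k1 * exp (k2 * u))) xi tau eta x t u p q w r =
    xi x t u * (k1 * exp (k2 * u) * p / x^2)
  + eta x t u * (- deriv f u - (k1 * k2 * exp (k2 * u) * w + k1 * k2 * k2 * exp (k2 * u) * p^2 + k1 * k2 * exp (k2 * u) * p / x))
  + eta_x xi tau eta x t u p q * (- (2 * (k1 * k2 * exp (k2 * u)) * p + k1 * exp (k2 * u) / x))
  + eta_t xi tau eta x t u p q
  + eta_xx xi tau eta x t u p q w r * (- (k1 * exp (k2 * u)))"
proof -
  let ?E = "fisher_cyl f (\<lambda>u. k1 * exp (k2 * u))"
  have e: "?E = (\<lambda>x t u ux ut uxx. ut - f u - (k1 * exp (k2 * u) * uxx + k1 * k2 * exp (k2 * u) * ux^2 + k1 * exp (k2 * u) * ux / x))"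
    unfolding fisher_cyl_def dg by simp
  have d1: "deriv (\<lambda>s. ?E s t u p q w) x = k1 * exp (k2 * u) * p / x^2"
    unfolding e using x
    by (intro DERIV_imp_deriv) (auto intro!: derivative_eq_intros simp: power2_eq_square field_simps)
  have d2: "deriv (\<lambda>s. ?E x s u p q w) t = 0"
    unfolding e by simp
  have fD: "(f has_real_derivative deriv f u) (at u)"
    using fd DERIV_deriv_iff_real_differentiable by blast
  have d3: "deriv (\<lambda>s. ?E x t s p q w) u = - deriv f u - (k1 * k2 * exp (k2 * u) * w + k1 * k2 * k2 * exp (k2 * u) * p^2 + k1 * k2 * exp (k2 * u) * p / x)"
    unfolding e using x
    by (intro DERIV_imp_deriv) (auto intro!: derivative_eq_intros fD simp: power2_eq_square field_simps)
  have d4: "deriv (\<lambda>s. ?E x t u s q w) p = - (2 * (k1 * k2 * exp (k2 * u)) * p + k1 * exp (k2 * u) / x)"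
    unfolding e using x
    by (intro DERIV_imp_deriv) (auto intro!: derivative_eq_intros simp: power2_eq_square field_simps)
  have d5: "deriv (\<lambda>s. ?E x t u p s w) q = 1"
    unfolding e
    by (intro DERIV_imp_deriv) (auto intro!: derivative_eq_intros)
  have d6: "deriv (\<lambda>s. ?E x t u p q s) w = - (k1 * exp (k2 * u))"
    unfolding e
    by (intro DERIV_imp_deriv) (auto intro!: derivative_eq_intros)
  show ?thesis unfolding pr2_def d1 d2 d3 d4 d5 d6 by simp
qed

lemma deriv_local:
  fixes F G :: "real \<Rightarrow> real"
  assumes "x > 0" "\<forall>s>0. F s = G s"
  shows "deriv F x = deriv G x"
  apply (rule deriv_cong_ev[OF _ refl])
  using eventually_nhds_in_open[of "{0<..}" x] assms by (auto elim: eventually_mono)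

lemma const_pos:
  fixes F :: "real \<Rightarrow> real"
  assumes "\<forall>s>0. (F has_real_derivative 0) (at s)" "a > 0" "b > 0"
  shows "F a = F b"
proof -
  obtain c where "\<forall>x\<in>{0<..}. F x = c"
    using has_field_derivative_zero_constant[of "{0<..}" F] assms(1)
    by (auto intro: has_field_derivative_at_within)
  then show ?thesis using assms by auto
qed

lemma smooth3_D:
  assumes "smooth3 F" "x > 0"
  shows "((\<lambda>s. iter_pD ds F s t u) has_real_derivative pDx (iter_pD ds F) x t u) (at x)"
    "((\<lambda>s. iter_pD ds F x s u) has_real_derivative pDt (iter_pD ds F) x t u) (at t)"
    "((\<lambda>s. iter_pD ds F x t s) has_real_derivative pDu (iter_pD ds F) x t u) (at u)"
  using assms unfolding smooth3_def Let_def pDx_def pDt_def pDu_def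
  by (auto simp: DERIV_deriv_iff_real_differentiable)

lemma smooth3_D0:
  assumes "smooth3 F" "x > 0"
  shows "((\<lambda>s. F s t u) has_real_derivative pDx F x t u) (at x)"
    "((\<lambda>s. F x s u) has_real_derivative pDt F x t u) (at t)"
    "((\<lambda>s. F x t s) has_real_derivative pDu F x t u) (at u)"
  using smooth3_D[OF assms, of "[]"] by auto

lemma smooth3_D1:
  assumes "smooth3 F" "x > 0"
  shows "((\<lambda>s. pDx F s t u) has_real_derivative pDx (pDx F) x t u) (at x)"
    "((\<lambda>s. pDx F x s u) has_real_derivative pDt (pDx F) x t u) (at t)"
    "((\<lambda>s. pDt F x s u) has_real_derivative pDt (pDt F) x t u) (at t)"
    "((\<lambda>s. pDx (pDx F) s t u) has_real_derivative pDx (pDx (pDx F)) x t u) (at x)"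
  using smooth3_D[OF assms, of "[DX]"] smooth3_D[OF assms, of "[DT]"] smooth3_D[OF assms, of "[DX,DX]"] by auto

lemma deriv_zero_fun: "deriv (\<lambda>s. c) x = (0::real)"
  by (rule DERIV_imp_deriv) auto

lemma f_analysis:
  fixes f T1 T2 :: "real \<Rightarrow> real"
  assumes fD: "\<And>u. (f has_real_derivative deriv f u) (at u)"
    and R: "\<And>t u. (2*a - T1 t) * deriv f u + T2 t + k2 * T1 t * f u = 0"
    and T2: "\<And>t. T2 t = deriv T1 t"
    and t0: "2*a - T1 t0 \<noteq> 0 \<or> T1 t0 \<noteq> 0"
    and np: "\<not> (\<exists>c. \<forall>u. deriv f u = c * exp (k2 * u))"
    and k2: "k2 \<noteq> 0"
  shows "\<exists>k3 k4. k3 \<noteq> 0 \<and> k4 \<noteq> 0 \<and> (\<forall>u. f u = k3 * exp (k4 * u))"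
proof -
  have constf: False if "\<And>u. f u = c" for c
  proof -
    have "f = (\<lambda>_. c)" using that by auto
    then have "\<forall>u. deriv f u = 0 * exp (k2 * u)" by (simp add: deriv_zero_fun)
    then show False using np by blast
  qed
  show ?thesis
  proof (cases "2*a - T1 t0 = 0")
    case True
    with t0 have T0: "T1 t0 \<noteq> 0" by auto
    have "f u = - T2 t0 / (k2 * T1 t0)" for u
    proof -
      have "T2 t0 + k2 * T1 t0 * f u = 0" using R[of t0 u] True by simp
      then show ?thesis using T0 k2 by (simp add: field_simps)
    qed
    then show ?thesis using constf by blast
  next
    case False
    define b where "b = 2*a - T1 t0"
    define l where "l = - k2 * T1 t0 / b"
    define m where "m = - T2 t0 / b"
    have b0: "b \<noteq> 0" using False b_def by auto
    have fl: "deriv f u = l * f u + m" for u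
    proof -
      have "b * deriv f u = - k2 * T1 t0 * f u - T2 t0" using R[of t0 u] unfolding b_def
        by (simp add: algebra_simps)
      then have "deriv f u = (- k2 * T1 t0 * f u - T2 t0) / b" using b0 by (simp add: field_simps)
      then show ?thesis unfolding l_def m_def using b0 by (simp add: field_simps)
    qed
    show ?thesis
    proof (cases "l = 0")
      case True
      have m0: "m \<noteq> 0"
      proof
        assume "m = 0"
        then have "\<forall>u. deriv f u = 0 * exp (k2 * u)" using fl True by simp
        then show False using np by blast
      qed
      have "\<forall>u. ((\<lambda>u. f u - m * u) has_real_derivative 0) (at u)"
        using fl True by (auto intro!: derivative_eq_intros fD)
      then have lin: "f u - m * u = f 0 - m * 0" for u by (rule DERIV_isconst_all)
      have T1z: "T1 t = 0" for t
      proof -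
        have "(2*a - T1 t) * deriv f 1 + T2 t + k2 * T1 t * f 1 - ((2*a - T1 t) * deriv f 0 + T2 t + k2 * T1 t * f 0) = 0"
          using R[of t 1] R[of t 0] by simp
        then have "k2 * T1 t * m = 0" using fl True lin[of 1] lin[of 0] by (auto simp: algebra_simps)
        then show ?thesis using k2 m0 by simp
      qed
      then have "T1 = (\<lambda>_. 0)" by auto
      then have "T2 t0 = 0" using T2 by (simp add: deriv_zero_fun)
      then have "m = 0" unfolding m_def by simp
      then show ?thesis using m0 by simp
    next
      case False
      define h where "h u = (f u + m / l) * exp (- l * u)" for u
      have "\<forall>u. (h has_real_derivative 0) (at u)"
      proof
        fix u
        have "(h has_real_derivative (deriv f u * exp (- l * u) + (f u + m / l) * (exp (- l * u) * (- l)))) (at u)"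
          unfolding h_def by (auto intro!: derivative_eq_intros fD)
        moreover have "deriv f u * exp (- l * u) + (f u + m / l) * (exp (- l * u) * (- l)) = 0"
          using fl[of u] False by (simp add: field_simps)
        ultimately show "(h has_real_derivative 0) (at u)" by simp
      qed
      then have hc: "h u = h 0" for u by (rule DERIV_isconst_all)
      define A where "A = f 0 + m / l"
      have ff: "f u = A * exp (l * u) - m / l" for u
      proof -
        have "(f u + m / l) * exp (- l * u) = A" using hc[of u] unfolding h_def A_def by simp
        then have "(f u + m / l) * exp (- l * u) * exp (l * u) = A * exp (l * u)" by simp
        then have "f u + m / l = A * exp (l * u)" by (simp add: mult.assoc exp_add[symmetric])
        then show ?thesis by simp
      qed
      have A0: "A \<noteq> 0" using ff constf by (metis mult_zero_left diff_0)
      have lk: "l \<noteq> k2"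
      proof
        assume "l = k2"
        then have "\<forall>u. deriv f u = (l * A) * exp (k2 * u)" using fl ff False by (simp add: field_simps)
        then show False using np by blast
      qed
      have e1: "exp l \<noteq> 1" using False by simp
      have key: "(2*a - T1 t) * l + k2 * T1 t = 0" for t
      proof -
        have "(2*a - T1 t) * deriv f 1 + T2 t + k2 * T1 t * f 1 - ((2*a - T1 t) * deriv f 0 + T2 t + k2 * T1 t * f 0) = 0"
          using R[of t 1] R[of t 0] by simp
        then have "((2*a - T1 t) * l + k2 * T1 t) * (f 1 - f 0) = 0"
          unfolding fl by (simp add: algebra_simps)
        moreover have "f 1 - f 0 = A * (exp l - 1)" using ff[of 1] ff[of 0] by (simp add: algebra_simps)
        ultimately show ?thesis using A0 e1 by simp
      qed
      have T1c: "T1 t = - 2 * a * l / (k2 - l)" for t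
        using key[of t] lk by (simp add: field_simps)
      then have "T1 = (\<lambda>_. - 2 * a * l / (k2 - l))" by auto
      then have T2z: "T2 t = 0" for t using T2 by (simp add: deriv_zero_fun)
      have "(2*a - T1 t0) * m = 0"
      proof -
        have R0: "(2*a - T1 t0) * (l * f 0 + m) + T2 t0 + k2 * T1 t0 * f 0 = 0" using R[of t0 0] fl[of 0] by simp
        have "(2*a - T1 t0)*m = (2*a - T1 t0) * (l * f 0 + m) + T2 t0 + k2 * T1 t0 * f 0 - f 0 * ((2*a - T1 t0) * l + k2 * T1 t0) - T2 t0"
          by (simp add: algebra_simps)
        then show ?thesis using R0 key[of t0] T2z[of t0] by simp
      qed
      then have "m = 0" using b0 b_def by simp
      then show ?thesis using ff A0 False by auto
    qed
  qed
qed

definition Phi :: "(real\<Rightarrow>real) \<Rightarrow> real \<Rightarrow> real \<Rightarrow> fun3 \<Rightarrow> fun3 \<Rightarrow> fun3 \<Rightarrow> real\<Rightarrow>real\<Rightarrow>real\<Rightarrow>real\<Rightarrow>real\<Rightarrow>real\<Rightarrow>real" where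
"Phi f k1 k2 xi tau eta x t u p w r = (let q = f u + k1*exp(k2*u)*w + k1*k2*exp(k2*u)*p^2 + k1*exp(k2*u)*p/x in
    xi x t u * (k1 * exp (k2 * u) * p / x^2)
  + eta x t u * (- deriv f u - (k1 * k2 * exp (k2 * u) * w + k1 * k2 * k2 * exp (k2 * u) * p^2 + k1 * k2 * exp (k2 * u) * p / x))
  + eta_x xi tau eta x t u p q * (- (2 * (k1 * k2 * exp (k2 * u)) * p + k1 * exp (k2 * u) / x))
  + eta_t xi tau eta x t u p q
  + eta_xx xi tau eta x t u p q w r * (- (k1 * exp (k2 * u))))"

lemma smooth1_diff: "smooth1 f \<Longrightarrow> f differentiable (at u)"
  unfolding smooth1_def by (metis funpow_0)

lemma Phi_zero:
  assumes "lie_point_symmetry (fisher_cyl f (\<lambda>u. k1 * exp (k2 * u))) xi tau eta" "smooth1 f" "x > 0"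
  shows "Phi f k1 k2 xi tau eta x t u p w r = 0"
proof -
  let ?q = "f u + k1*exp(k2*u)*w + k1*k2*exp(k2*u)*p^2 + k1*exp(k2*u)*p/x"
  have "fisher_cyl f (\<lambda>u. k1 * exp (k2 * u)) x t u p ?q w = 0"
    unfolding fisher_cyl_def dg by simp
  then have "pr2 (fisher_cyl f (\<lambda>u. k1 * exp (k2 * u))) xi tau eta x t u p ?q w r = 0"
    using assms(1,3) unfolding lie_point_symmetry_def by blast
  then show ?thesis unfolding pr2_fisher[OF assms(3) smooth1_diff[OF assms(2)]] Phi_def Let_def .
qed

lemma dcf: "(\<And>s. F s = c) \<Longrightarrow> deriv F u = (0::real)"
proof -
  assume "\<And>s. F s = c"
  then have "F = (\<lambda>_. c)" by auto
  then show ?thesis by (simp add: deriv_zero_fun)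
qed

lemma only_if:
  fixes f :: "real \<Rightarrow> real"
  assumes sf: "smooth1 f" and k1: "k1 \<noteq> 0" and k2: "k2 \<noteq> 0"
    and sym: "lie_point_symmetry (fisher_cyl f (\<lambda>u. k1 * exp (k2 * u))) xi tau eta"
    and nt: "\<not> (\<exists>c. \<forall>x t u. x > 0 \<longrightarrow> xi x t u = 0 \<and> tau x t u = c \<and> eta x t u = 0)"
    and np: "\<not> (\<exists>c. \<forall>u. deriv f u = c * exp (k2 * u))"
  shows "\<exists>k3 k4. k3 \<noteq> 0 \<and> k4 \<noteq> 0 \<and> (\<forall>u. f u = k3 * exp (k4 * u))"
proof -
  have sx: "smooth3 xi" and st: "smooth3 tau" and se: "smooth3 eta"
    using sym unfolding lie_point_symmetry_def by auto
  have fD: "\<And>u. (f has_real_derivative deriv f u) (at u)"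
    using smooth1_diff[OF sf] DERIV_deriv_iff_real_differentiable by blast
  note Z = Phi_zero[OF sym sf]
  have G0: "k1 * exp (k2 * u) \<noteq> 0" for u using k1 by simp
  have t1: "pDx tau x t u = 0 \<and> pDu tau x t u = 0" if x: "x > 0" for x t u
  proof -
    have d: "Phi f k1 k2 xi tau eta x t u p 0 1 - Phi f k1 k2 xi tau eta x t u p 0 0
       = 2 * (k1 * exp (k2 * u)) * (pDx tau x t u + pDu tau x t u * p)" for p
      unfolding Phi_def Let_def eta_xx_def eta_x_def eta_t_def by (simp add: algebra_simps)
    have "pDx tau x t u + pDu tau x t u * p = 0" for p
      using d[of p] Z[OF x] G0[of u] by simp
    from this[of 0] this[of 1] show ?thesis by simp
  qed
  define T where "T t = tau 1 t 0" for t
  have tauT: "tau x t u = T t" if x: "x > 0" for x t u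
  proof -
    have "tau x t u = tau 1 t u"
      by (rule const_pos[where F="\<lambda>s. tau s t u"]) (use smooth3_D0(1)[OF st] t1 x in auto)
    also have "\<dots> = tau 1 t 0"
      using smooth3_D0(3)[OF st, of 1] t1[of 1] by (intro DERIV_isconst_all) auto
    finally show ?thesis unfolding T_def .
  qed
  have Tfun: "(\<lambda>s. tau x s u) = T" if "x > 0" for x u using tauT that by auto
  have tauD: "pDt tau x t u = deriv T t" "pDx (pDx tau) x t u = 0" "pDu (pDx tau) x t u = 0"
    "pDu (pDu tau) x t u = 0" "pDx tau x t u = 0" "pDu tau x t u = 0" if x: "x > 0" for x t u
  proof -
    show "pDt tau x t u = deriv T t" unfolding pDt_def Tfun[OF x] ..
    have "pDx (pDx tau) x t u = deriv (\<lambda>s. 0) x"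
      unfolding pDx_def[of "pDx tau"] by (rule deriv_local) (use x t1 in auto)
    then show "pDx (pDx tau) x t u = 0" by (simp add: deriv_zero_fun)
    have "(\<lambda>s. pDx tau x t s) = (\<lambda>s. 0)" using t1 x by auto
    then show "pDu (pDx tau) x t u = 0" unfolding pDu_def[of "pDx tau"] by (simp add: deriv_zero_fun)
    have "(\<lambda>s. pDu tau x t s) = (\<lambda>s. 0)" using t1 x by auto
    then show "pDu (pDu tau) x t u = 0" unfolding pDu_def[of "pDu tau"] by (simp add: deriv_zero_fun)
    show "pDx tau x t u = 0" "pDu tau x t u = 0" using t1 x by auto
  qed
  have TD: "(T has_real_derivative deriv T t) (at t)" for t
    using smooth3_D0(2)[OF st, where x=1 and t=t and u=0] tauD(1)[of 1 t 0] Tfun[of 1 0] by simp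
  have dT: "deriv T = (\<lambda>s. pDt tau 1 s 0)" using tauD(1)[of 1 _ 0] by auto
  have TDD: "(deriv T has_real_derivative deriv (deriv T) t) (at t)" for t
  proof -
    have "(deriv T has_real_derivative pDt (pDt tau) 1 t 0) (at t)"
      unfolding dT using smooth3_D1(3)[OF st, where x=1 and t=t and u=0] by simp
    then show ?thesis using DERIV_imp_deriv by metis
  qed
  have s3: "k2 * eta x t u = 2 * pDx xi x t u - pDt tau x t u \<and> pDu xi x t u = 0" if x: "x > 0" for x t u
  proof -
    have d: "Phi f k1 k2 xi tau eta x t u p 1 0 - Phi f k1 k2 xi tau eta x t u p 0 0
       = k1 * exp (k2 * u) * (2 * pDx xi x t u - pDt tau x t u - k2 * eta x t u) + 2 * (k1 * exp (k2 * u)) * pDu xi x t u * p" for p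
      unfolding Phi_def Let_def eta_xx_def eta_x_def eta_t_def tauD(2-6)[OF x] by (simp add: algebra_simps)
    have "(2 * pDx xi x t u - pDt tau x t u - k2 * eta x t u) + 2 * pDu xi x t u * p = 0" for p
    proof -
      have "k1 * exp (k2 * u) * ((2 * pDx xi x t u - pDt tau x t u - k2 * eta x t u) + 2 * pDu xi x t u * p) = 0"
        using d[of p] Z[OF x] by (simp add: algebra_simps)
      then show ?thesis using G0[of u] by simp
    qed
    from this[of 0] this[of 1] show ?thesis by simp
  qed
  have xi0: "xi x t u = xi x t 0" if x: "x > 0" for x t u
  proof -
    have "\<forall>s. ((\<lambda>s. xi x t s) has_real_derivative 0) (at s)"
      using smooth3_D0(3)[OF sx x, where t=t] s3[OF x, of t] by auto
    from DERIV_isconst_all[OF this] show ?thesis .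
  qed
  have xi0f: "\<forall>s>0. xi s t u = xi s t 0" for t u using xi0 by blast
  have xx0: "pDx xi x t u = pDx xi x t 0" if x: "x > 0" for x t u
    unfolding pDx_def by (rule deriv_local[OF x xi0f])
  have xxx0: "pDx (pDx xi) x t u = pDx (pDx xi) x t 0" if x: "x > 0" for x t u
    unfolding pDx_def[of "pDx xi"] by (rule deriv_local[OF x]) (use xx0 in blast)
  have xt0: "pDt xi x t u = pDt xi x t 0" if x: "x > 0" for x t u
  proof -
    have "(\<lambda>s. xi x s u) = (\<lambda>s. xi x s 0)" using xi0[OF x] by (intro ext) blast
    then show ?thesis unfolding pDt_def by simp
  qed
  have xuu: "pDu (pDu xi) x t u = 0" if x: "x > 0" for x t u
    unfolding pDu_def[of "pDu xi"] by (rule dcf) (use s3[OF x] in blast)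
  have xxu: "pDu (pDx xi) x t u = 0" if x: "x > 0" for x t u
    unfolding pDu_def[of "pDx xi"] by (rule dcf) (rule xx0[OF x])
  have etaf: "eta x t u = (2 * pDx xi x t 0 - deriv T t) / k2" if x: "x > 0" for x t u
    using s3[OF x, of t u] xx0[OF x, of t u] tauD(1)[OF x, of t u] k2 by (simp add: field_simps)
  have eu: "pDu eta x t u = 0" "pDu (pDu eta) x t u = 0" if x: "x > 0" for x t u
  proof -
    have *: "pDu eta x t s = 0" for s
      unfolding pDu_def by (rule dcf) (rule etaf[OF x])
    then show "pDu eta x t u = 0" .
    show "pDu (pDu eta) x t u = 0" unfolding pDu_def[of "pDu eta"] by (rule dcf) (rule *)
  qed
  have ex: "pDx eta x t u = 2 * pDx (pDx xi) x t 0 / k2" if x: "x > 0" for x t u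
  proof -
    have "pDx eta x t u = deriv (\<lambda>s. (2 * pDx xi s t 0 - deriv T t) / k2) x"
      unfolding pDx_def[of eta] by (rule deriv_local[OF x]) (use etaf in auto)
    also have "\<dots> = 2 * pDx (pDx xi) x t 0 / k2"
      by (rule DERIV_imp_deriv) (use k2 in \<open>auto intro!: derivative_eq_intros smooth3_D1(1)[OF sx x]\<close>)
    finally show ?thesis .
  qed
  have exu: "pDu (pDx eta) x t u = 0" if x: "x > 0" for x t u
    unfolding pDu_def[of "pDx eta"] by (rule dcf) (rule ex[OF x])
  have exx: "pDx (pDx eta) x t u = 2 * pDx (pDx (pDx xi)) x t 0 / k2" if x: "x > 0" for x t u
  proof -
    have "pDx (pDx eta) x t u = deriv (\<lambda>s. 2 * pDx (pDx xi) s t 0 / k2) x"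
      unfolding pDx_def[of "pDx eta"] by (rule deriv_local[OF x]) (use ex in auto)
    also have "\<dots> = 2 * pDx (pDx (pDx xi)) x t 0 / k2"
      by (rule DERIV_imp_deriv) (use k2 in \<open>auto intro!: derivative_eq_intros smooth3_D1(4)[OF sx x]\<close>)
    finally show ?thesis .
  qed
  have et: "pDt eta x t u = (2 * pDt (pDx xi) x t 0 - deriv (deriv T) t) / k2" if x: "x > 0" for x t u
  proof -
    have "(\<lambda>s. eta x s u) = (\<lambda>s. (2 * pDx xi x s 0 - deriv T s) / k2)" using etaf x by auto
    then have "pDt eta x t u = deriv (\<lambda>s. (2 * pDx xi x s 0 - deriv T s) / k2) t"
      unfolding pDt_def[of eta] by simp
    also have "\<dots> = (2 * pDt (pDx xi) x t 0 - deriv (deriv T) t) / k2"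
      by (rule DERIV_imp_deriv) (use k2 in \<open>auto intro!: derivative_eq_intros smooth3_D1(2)[OF sx x] TDD\<close>)
    finally show ?thesis .
  qed

  have subst: "xi x t u = xi x t 0" "pDx xi x t u = pDx xi x t 0" "pDx (pDx xi) x t u = pDx (pDx xi) x t 0"
     "pDt xi x t u = pDt xi x t 0" "pDu (pDu xi) x t u = 0" "pDu (pDx xi) x t u = 0" "pDu xi x t u = 0"
     "eta x t u = (2 * pDx xi x t 0 - deriv T t) / k2" "pDu eta x t u = 0" "pDu (pDu eta) x t u = 0"
     "pDx eta x t u = 2 * pDx (pDx xi) x t 0 / k2" "pDu (pDx eta) x t u = 0"
     "pDx (pDx eta) x t u = 2 * pDx (pDx (pDx xi)) x t 0 / k2"
     "pDt eta x t u = (2 * pDt (pDx xi) x t 0 - deriv (deriv T) t) / k2"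
     "pDt tau x t u = deriv T t" "pDx (pDx tau) x t u = 0" "pDu (pDx tau) x t u = 0"
     "pDu (pDu tau) x t u = 0" "pDx tau x t u = 0" "pDu tau x t u = 0"
    if x: "x > 0" for x t u
    using xi0[OF x, of t u] xx0[OF x, of t u] xxx0[OF x, of t u] xt0[OF x, of t u] xuu[OF x, of t u]
      xxu[OF x, of t u] s3[OF x, of t u] etaf[OF x, of t u] eu[OF x, of t u] ex[OF x, of t u] exu[OF x, of t u]
      exx[OF x, of t u] et[OF x, of t u] tauD[OF x, of t u] by auto
  have c1: "Phi f k1 k2 xi tau eta x t u 1 0 0 - Phi f k1 k2 xi tau eta x t u 0 0 0
     = k1 * exp (k2 * u) * (xi x t 0 / x^2 - pDx xi x t 0 / x - 3 * pDx (pDx xi) x t 0) - pDt xi x t 0"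
    if x: "x > 0" for x t u
    unfolding Phi_def Let_def eta_xx_def eta_x_def eta_t_def subst[OF x, of t u] using x k2
    by (simp add: algebra_simps) (simp add: field_simps)
  have c0: "(2 * pDx xi x t 0 - deriv T t) * deriv f u + 2 * (k1 * exp (k2 * u)) * (pDx (pDx xi) x t 0 / x + pDx (pDx (pDx xi)) x t 0)
      - 2 * pDt (pDx xi) x t 0 + deriv (deriv T) t + k2 * deriv T t * f u = - k2 * Phi f k1 k2 xi tau eta x t u 0 0 0"
    if x: "x > 0" for x t u
    unfolding Phi_def Let_def eta_xx_def eta_x_def eta_t_def subst[OF x, of t u] using x k2
    by (simp add: algebra_simps) (simp add: field_simps)

  have Bv: "xi x t 0 / x^2 - pDx xi x t 0 / x - 3 * pDx (pDx xi) x t 0 = 0 \<and> pDt xi x t 0 = 0"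
    if x: "x > 0" for x t
  proof -
    define b where "b = xi x t 0 / x^2 - pDx xi x t 0 / x - 3 * pDx (pDx xi) x t 0"
    have e0: "k1 * b - pDt xi x t 0 = 0" using c1[OF x, of t 0] Z[OF x] unfolding b_def by simp
    have e1: "k1 * exp k2 * b - pDt xi x t 0 = 0" using c1[OF x, of t 1] Z[OF x] unfolding b_def by simp
    have "k1 * (exp k2 - 1) * b = 0" using e0 e1 by (simp add: algebra_simps)
    moreover have "exp k2 \<noteq> 1" using k2 by simp
    ultimately have "b = 0" using k1 by simp
    then show ?thesis using e0 unfolding b_def by simp
  qed
  have xit: "xi x t 0 = xi x 0 0" if x: "x > 0" for x t
  proof -
    have "\<forall>s. ((\<lambda>s. xi x s 0) has_real_derivative 0) (at s)"
      using smooth3_D0(2)[OF sx x, where u=0] Bv[OF x] by auto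
    from DERIV_isconst_all[OF this] show ?thesis .
  qed
  define X where "X x = xi x 0 0" for x
  have xiX: "xi x t u = X x" if x: "x > 0" for x t u
    using xi0[OF x, of t u] xit[OF x, of t] unfolding X_def by simp
  have X1: "pDx xi x t 0 = deriv X x" if x: "x > 0" for x t
    unfolding pDx_def[of xi] by (rule deriv_local[OF x]) (use xiX in blast)
  have X2: "pDx (pDx xi) x t 0 = deriv (deriv X) x" if x: "x > 0" for x t
    unfolding pDx_def[of "pDx xi"] by (rule deriv_local[OF x]) (use X1 in blast)
  have X3: "pDx (pDx (pDx xi)) x t 0 = deriv (deriv (deriv X)) x" if x: "x > 0" for x t
    unfolding pDx_def[of "pDx (pDx xi)"] by (rule deriv_local[OF x]) (use X2 in blast)
  have Xt: "pDt (pDx xi) x t 0 = 0" if x: "x > 0" for x t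
    unfolding pDt_def[of "pDx xi"] by (rule dcf) (rule X1[OF x])
  have BX: "X x / x^2 - deriv X x / x - 3 * deriv (deriv X) x = 0" if x: "x > 0" for x
    using Bv[OF x, of 0] xiX[OF x, of 0 0] X1[OF x, of 0] X2[OF x, of 0] by simp
  have R: "(2 * deriv X x - deriv T t) * deriv f u + 2 * (k1 * exp (k2 * u)) * (deriv (deriv X) x / x + deriv (deriv (deriv X)) x)
      + deriv (deriv T) t + k2 * deriv T t * f u = 0" if x: "x > 0" for x t u
    using c0[OF x, of t u] Z[OF x, of t u 0 0 0] X1[OF x, of t] X2[OF x, of t] X3[OF x, of t] Xt[OF x, of t] by simp
  obtain u1 u2 where u12: "deriv f u1 * exp (k2 * u2) \<noteq> deriv f u2 * exp (k2 * u1)"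
  proof -
    have "\<exists>u1 u2. deriv f u1 * exp (k2 * u2) \<noteq> deriv f u2 * exp (k2 * u1)"
    proof (rule ccontr)
      assume "\<not> ?thesis"
      then have "\<forall>u. deriv f u = deriv f 0 * exp (k2 * u)" by (metis exp_zero mult_1_right mult_zero_right)
      then show False using np by blast
    qed
    then show ?thesis using that by blast
  qed
  define K where "K x = deriv (deriv X) x / x + deriv (deriv (deriv X)) x" for x
  define a where "a = deriv X 1"
  have Xc: "deriv X x = a" if x: "x > 0" for x
  proof -
    define d where "d = deriv X x - deriv X 1"
    define e where "e = K x - K 1"
    have q: "2 * d * deriv f v + 2 * (k1 * exp (k2 * v)) * e = 0" for v
    proof -
      have "(2 * deriv X x - deriv T 0) * deriv f v + 2 * (k1 * exp (k2 * v)) * K x + deriv (deriv T) 0 + k2 * deriv T 0 * f v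
        - ((2 * deriv X 1 - deriv T 0) * deriv f v + 2 * (k1 * exp (k2 * v)) * K 1 + deriv (deriv T) 0 + k2 * deriv T 0 * f v) = 0"
        using R[OF x, of 0 v] R[of 1 0 v] unfolding K_def by simp
      then show ?thesis unfolding d_def e_def by (simp add: algebra_simps)
    qed
    have "d * (deriv f u1 * exp (k2 * u2) - deriv f u2 * exp (k2 * u1))
        = ((2 * d * deriv f u1 + 2 * (k1 * exp (k2 * u1)) * e) * exp (k2 * u2)
          - (2 * d * deriv f u2 + 2 * (k1 * exp (k2 * u2)) * e) * exp (k2 * u1)) / 2"
      by (simp add: algebra_simps)
    then have "d * (deriv f u1 * exp (k2 * u2) - deriv f u2 * exp (k2 * u1)) = 0" using q by simp
    then have "d = 0" using u12 by simp
    then show ?thesis unfolding d_def a_def by simp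
  qed
  have X2z: "deriv (deriv X) x = 0" if x: "x > 0" for x
  proof -
    have "deriv (deriv X) x = deriv (\<lambda>_. a) x" by (rule deriv_local[OF x]) (use Xc in blast)
    then show ?thesis by (simp add: deriv_zero_fun)
  qed
  have X3z: "deriv (deriv (deriv X)) x = 0" if x: "x > 0" for x
  proof -
    have "deriv (deriv (deriv X)) x = deriv (\<lambda>_. 0) x" by (rule deriv_local[OF x]) (use X2z in blast)
    then show ?thesis by (simp add: deriv_zero_fun)
  qed
  have Xlin: "X x = a * x" if x: "x > 0" for x
  proof -
    have "X x / x^2 - a / x = 0" using BX[OF x] Xc[OF x] X2z[OF x] by simp
    then show ?thesis using x by (simp add: field_simps power2_eq_square)
  qed
  have R6: "(2 * a - deriv T t) * deriv f u + deriv (deriv T) t + k2 * deriv T t * f u = 0" for t u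
    using R[of 1 t u] Xc[of 1] X2z[of 1] X3z[of 1] by simp
  obtain t0 where t0: "2 * a - deriv T t0 \<noteq> 0 \<or> deriv T t0 \<noteq> 0"
  proof -
    have "\<exists>t0. 2 * a - deriv T t0 \<noteq> 0 \<or> deriv T t0 \<noteq> 0"
    proof (rule ccontr)
      assume "\<not> ?thesis"
      then have T0: "deriv T t = 0" and a0: "a = 0" for t by auto
      have "\<forall>t. (T has_real_derivative 0) (at t)" using TD T0 by metis
      then have Tc: "T t = T 0" for t by (rule DERIV_isconst_all)
      have "\<forall>x t u. x > 0 \<longrightarrow> xi x t u = 0 \<and> tau x t u = T 0 \<and> eta x t u = 0"
      proof (intro allI impI)
        fix x t u :: real assume x: "x > 0"
        show "xi x t u = 0 \<and> tau x t u = T 0 \<and> eta x t u = 0"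
          using xiX[OF x, of t u] Xlin[OF x] a0 tauT[OF x, of t u] Tc[of t] etaf[OF x, of t u]
            X1[OF x, of t] Xc[OF x] T0[of t] by simp
      qed
      then show False using nt by blast
    qed
    then show ?thesis using that by blast
  qed
  show ?thesis
    by (rule f_analysis[where ?T1.0="deriv T" and ?T2.0="deriv (deriv T)" and a=a and ?t0.0=t0, OF fD R6 refl t0 np k2])

qed

definition cls :: "fun3 \<Rightarrow> bool" where
  "cls F \<longleftrightarrow> (\<exists>a b c d e. F = (\<lambda>x t u. a*x + b*t + c*exp(d*t) + e))"

lemma cls_pD: "cls F \<Longrightarrow> cls (pD dir F)"
proof -
  assume "cls F"
  then obtain a b c d e where F: "F = (\<lambda>x t u. a*x + b*t + c*exp(d*t) + e)" unfolding cls_def by blast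
  show ?thesis
  proof (cases dir)
    case DX
    have eq: "pDx F = (\<lambda>x t u. 0*x + 0*t + 0*exp(0*t) + a)"
      unfolding F pDx_def by (intro ext DERIV_imp_deriv) (auto intro!: derivative_eq_intros)
    show ?thesis unfolding cls_def DX pD.simps eq
      by (rule exI[of _ "0::real"], rule exI[of _ "0::real"], rule exI[of _ "0::real"], rule exI[of _ "0::real"], rule exI[of _ a]) simp
  next
    case DT
    have eq: "pDt F = (\<lambda>x t u. 0*x + 0*t + (c*d)*exp(d*t) + b)"
      unfolding F pDt_def by (intro ext DERIV_imp_deriv) (auto intro!: derivative_eq_intros)
    show ?thesis unfolding cls_def DT pD.simps eq
      by (rule exI[of _ "0::real"], rule exI[of _ "0::real"], rule exI[of _ "c*d"], rule exI[of _ d], rule exI[of _ b]) simp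
  next
    case DU
    have eq: "pDu F = (\<lambda>x t u. 0*x + 0*t + 0*exp(0*t) + 0)"
      unfolding F pDu_def by (intro ext DERIV_imp_deriv) (auto intro!: derivative_eq_intros)
    show ?thesis unfolding cls_def DU pD.simps eq
      by (rule exI[of _ "0::real"], rule exI[of _ "0::real"], rule exI[of _ "0::real"], rule exI[of _ "0::real"], rule exI[of _ "0::real"]) simp
  qed
qed

lemma cls_iter: "cls F \<Longrightarrow> cls (iter_pD ds F)"
  by (induction ds) (auto intro: cls_pD)

lemma cls_good:
  assumes "cls G"
  shows "continuous_on {p :: real \<times> real \<times> real. fst p > 0} (\<lambda>(x, t, u). G x t u) \<and>
      (\<forall>x t u. x > 0 \<longrightarrow>
          (\<lambda>s. G s t u) differentiable (at x) \<and>
          (\<lambda>s. G x s u) differentiable (at t) \<and>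
          (\<lambda>s. G x t s) differentiable (at u))"
proof -
  obtain a b c d e where F: "G = (\<lambda>x t u. a*x + b*t + c*exp(d*t) + e)" using assms unfolding cls_def by blast
  have "continuous_on {p :: real \<times> real \<times> real. fst p > 0} (\<lambda>p. a * fst p + b * fst (snd p) + c * exp (d * fst (snd p)) + e)"
    by (intro continuous_intros)
  then have "continuous_on {p :: real \<times> real \<times> real. fst p > 0} (\<lambda>(x, t, u). G x t u)"
    unfolding F by (simp add: case_prod_beta)
  moreover have "\<forall>x t u. x > 0 \<longrightarrow>
          (\<lambda>s. G s t u) differentiable (at x) \<and>
          (\<lambda>s. G x s u) differentiable (at t) \<and>
          (\<lambda>s. G x t s) differentiable (at u)"
    unfolding F real_differentiable_def by (auto intro!: exI derivative_eq_intros)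
  ultimately show ?thesis by blast
qed

lemma smooth3_I:
  assumes "\<And>x t u. F x t u = a*x + b*t + c*exp(d*t) + e"
  shows "smooth3 F"
proof -
  have "cls F" unfolding cls_def
    by (rule exI[of _ a], rule exI[of _ b], rule exI[of _ c], rule exI[of _ d], rule exI[of _ e]) (use assms in \<open>intro ext\<close>)
  then show ?thesis unfolding smooth3_def Let_def using cls_good cls_iter by blast
qed

lemma sm_const: "smooth3 (\<lambda>x t u. c)" by (rule smooth3_I[of _ 0 0 0 0 c]) simp
lemma sm_linx: "smooth3 (\<lambda>x t u. c * x)" by (rule smooth3_I[of _ c 0 0 0 0]) simp
lemma sm_lint: "smooth3 (\<lambda>x t u. c * t)" by (rule smooth3_I[of _ 0 c 0 0 0]) simp
lemma sm_exp: "smooth3 (\<lambda>x t u. c * exp (d * t))" by (rule smooth3_I[of _ 0 0 c d 0]) simp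
lemma sm_exp1: "smooth3 (\<lambda>x t u. exp (d * t))" by (rule smooth3_I[of _ 0 0 1 d 0]) simp

lemma pDx_const: "pDx (\<lambda>x t u. F t u) = (\<lambda>x t u. 0)"
  unfolding pDx_def by (simp add: deriv_zero_fun)
lemma pDt_const: "pDt (\<lambda>x t u. F x u) = (\<lambda>x t u. 0)"
  unfolding pDt_def by (simp add: deriv_zero_fun)
lemma pDu_const: "pDu (\<lambda>x t u. F x t) = (\<lambda>x t u. 0)"
  unfolding pDu_def by (simp add: deriv_zero_fun)
lemma pDx_lin: "pDx (\<lambda>x t u. c * x) = (\<lambda>x t u. c)"
  unfolding pDx_def by (intro ext DERIV_imp_deriv) (auto intro!: derivative_eq_intros)
lemma pDt_lin: "pDt (\<lambda>x t u. c * t) = (\<lambda>x t u. c)"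
  unfolding pDt_def by (intro ext DERIV_imp_deriv) (auto intro!: derivative_eq_intros)
lemma pDt_cexp: "pDt (\<lambda>x t u. c * exp (d * t)) = (\<lambda>x t u. c * d * exp (d * t))"
  unfolding pDt_def by (intro ext DERIV_imp_deriv) (auto intro!: derivative_eq_intros)
lemma pDt_exp: "pDt (\<lambda>x t u. exp (d * t)) = (\<lambda>x t u. d * exp (d * t))"
  unfolding pDt_def by (intro ext DERIV_imp_deriv) (auto intro!: derivative_eq_intros)

lemma sym_intro:
  assumes "smooth3 xi" "smooth3 tau" "smooth3 eta" "\<And>u. f differentiable (at u)"
    "\<And>x t u p w r. x > 0 \<Longrightarrow> Phi f k1 k2 xi tau eta x t u p w r = 0"
  shows "lie_point_symmetry (fisher_cyl f (\<lambda>u. k1 * exp (k2 * u))) xi tau eta"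
  unfolding lie_point_symmetry_def
proof (intro conjI assms allI impI)
  fix x t u ux ut uxx uxt :: real
  assume x: "x > 0" and E: "fisher_cyl f (\<lambda>u. k1 * exp (k2 * u)) x t u ux ut uxx = 0"
  have q: "ut = f u + k1*exp(k2*u)*uxx + k1*k2*exp(k2*u)*ux^2 + k1*exp(k2*u)*ux/x"
    using E unfolding fisher_cyl_def dg by simp
  show "pr2 (fisher_cyl f (\<lambda>u. k1 * exp (k2 * u))) xi tau eta x t u ux ut uxx uxt = 0"
    unfolding pr2_fisher[OF x assms(4)] q using assms(5)[OF x, of t u ux uxx uxt]
    unfolding Phi_def Let_def .
qed

lemma symT:
  assumes "\<And>u. f differentiable (at u)"
  shows "lie_point_symmetry (fisher_cyl f (\<lambda>u. k1 * exp (k2 * u))) (\<lambda>x t u. 0) (\<lambda>x t u. 1) (\<lambda>x t u. 0)"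
  by (rule sym_intro[OF sm_const sm_const sm_const assms])
     (auto simp: Phi_def Let_def eta_x_def eta_t_def eta_xx_def pDx_const pDt_const pDu_const)

lemma symA:
  "lie_point_symmetry (fisher_cyl (\<lambda>u. k3 * exp (k4 * u)) (\<lambda>u. k1 * exp (k2 * u)))
          (\<lambda>x t u. (k4 - k2) * x) (\<lambda>x t u. 2 * k4 * t) (\<lambda>x t u. -2)"
proof (rule sym_intro[OF sm_linx sm_lint sm_const])
  show "(\<lambda>u. k3 * exp (k4 * u)) differentiable (at u)" for u unfolding real_differentiable_def by (auto intro!: exI derivative_eq_intros)
  have df: "deriv (\<lambda>u. k3 * exp (k4 * u)) = (\<lambda>u. k3 * k4 * exp (k4 * u::real))"
    by (rule ext, rule DERIV_imp_deriv) (auto intro!: derivative_eq_intros)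
  fix x t u p w r :: real assume x: "x > 0"
  show "Phi (\<lambda>u. k3 * exp (k4 * u)) k1 k2 (\<lambda>x t u. (k4 - k2) * x) (\<lambda>x t u. 2 * k4 * t) (\<lambda>x t u. -2) x t u p w r = 0"
    unfolding Phi_def Let_def eta_x_def eta_t_def eta_xx_def df pDx_lin pDt_lin pDx_const pDt_const pDu_const
    using x by (simp add: field_simps power2_eq_square)
qed


lemma symB:
  "lie_point_symmetry (fisher_cyl (\<lambda>u. k3 * exp (k2 * u) + k5) (\<lambda>u. k1 * exp (k2 * u)))
          (\<lambda>x t u. 0) (\<lambda>x t u. exp (- k2 * k5 * t)) (\<lambda>x t u. k5 * exp (- k2 * k5 * t))"
proof (rule sym_intro[OF sm_const sm_exp1 sm_exp])
  show "(\<lambda>u. k3 * exp (k2 * u) + k5) differentiable (at u)" for u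
    unfolding real_differentiable_def by (auto intro!: exI derivative_eq_intros)
  have df: "deriv (\<lambda>u. k3 * exp (k2 * u) + k5) = (\<lambda>u. k3 * k2 * exp (k2 * u::real))"
    by (rule ext, rule DERIV_imp_deriv) (auto intro!: derivative_eq_intros)
  fix x t u p w r :: real assume x: "x > 0"
  show "Phi (\<lambda>u. k3 * exp (k2 * u) + k5) k1 k2 (\<lambda>x t u. 0) (\<lambda>x t u. exp (- k2 * k5 * t)) (\<lambda>x t u. k5 * exp (- k2 * k5 * t)) x t u p w r = 0"
    unfolding Phi_def Let_def eta_x_def eta_t_def eta_xx_def df pDt_exp pDt_cexp pDx_const pDt_const pDu_const
    using x by (simp add: field_simps power2_eq_square)
qed

lemma symC1:
  "lie_point_symmetry (fisher_cyl (\<lambda>u. k5) (\<lambda>u. k1 * exp (k2 * u)))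
          (\<lambda>x t u. 0) (\<lambda>x t u. exp (- k2 * k5 * t)) (\<lambda>x t u. k5 * exp (- k2 * k5 * t))"
proof (rule sym_intro[OF sm_const sm_exp1 sm_exp])
  show "(\<lambda>u. k5) differentiable (at u)" for u by simp
  have df: "deriv (\<lambda>u. k5) = (\<lambda>u. 0::real)"
    by (rule ext) (simp add: deriv_zero_fun)
  fix x t u p w r :: real assume x: "x > 0"
  show "Phi (\<lambda>u. k5) k1 k2 (\<lambda>x t u. 0) (\<lambda>x t u. exp (- k2 * k5 * t)) (\<lambda>x t u. k5 * exp (- k2 * k5 * t)) x t u p w r = 0"
    unfolding Phi_def Let_def eta_x_def eta_t_def eta_xx_def df pDt_exp pDt_cexp pDx_const pDt_const pDu_const
    using x by (simp add: field_simps power2_eq_square)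
qed

lemma symC2:
  "lie_point_symmetry (fisher_cyl (\<lambda>u. k5) (\<lambda>u. k1 * exp (k2 * u)))
          (\<lambda>x t u. k2 * x) (\<lambda>x t u. 0) (\<lambda>x t u. 2)"
proof (rule sym_intro[OF sm_linx sm_const sm_const])
  show "(\<lambda>u. k5) differentiable (at u)" for u by simp
  have df: "deriv (\<lambda>u. k5) = (\<lambda>u. 0::real)"
    by (rule ext) (simp add: deriv_zero_fun)
  fix x t u p w r :: real assume x: "x > 0"
  show "Phi (\<lambda>u. k5) k1 k2 (\<lambda>x t u. k2 * x) (\<lambda>x t u. 0) (\<lambda>x t u. 2) x t u p w r = 0"
    unfolding Phi_def Let_def eta_x_def eta_t_def eta_xx_def df pDx_lin pDx_const pDt_const pDu_const
    using x by (simp add: field_simps power2_eq_square)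
qed

lemma types:
  fixes f :: "real \<Rightarrow> real"
  assumes sf: "smooth1 f" and nz: "\<exists>u. f u \<noteq> 0" and k2: "k2 \<noteq> 0"
    and c: "\<forall>u. deriv f u = c * exp (k2 * u)"
  shows "(\<exists>k3 k4. k3 \<noteq> 0 \<and> k4 \<noteq> 0 \<and> (\<forall>u. f u = k3 * exp (k4 * u))) \<or>
      (\<exists>k3 k5. k3 \<noteq> 0 \<and> k5 \<noteq> 0 \<and> (\<forall>u. f u = k3 * exp (k2 * u) + k5)) \<or>
      (\<exists>k5. k5 \<noteq> 0 \<and> (\<forall>u. f u = k5))"
proof -
  have fD: "\<And>u. (f has_real_derivative deriv f u) (at u)"
    using smooth1_diff[OF sf] DERIV_deriv_iff_real_differentiable by blast
  have "\<forall>u. ((\<lambda>u. f u - c / k2 * exp (k2 * u)) has_real_derivative 0) (at u)"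
  proof
    fix u
    have "((\<lambda>u. f u - c / k2 * exp (k2 * u)) has_real_derivative (deriv f u - c / k2 * (exp (k2 * u) * k2))) (at u)"
      by (auto intro!: derivative_eq_intros fD)
    then show "((\<lambda>u. f u - c / k2 * exp (k2 * u)) has_real_derivative 0) (at u)" using c k2 by simp
  qed
  then have h: "f u - c / k2 * exp (k2 * u) = f 0 - c / k2 * exp (k2 * 0)" for u by (rule DERIV_isconst_all)
  define k5 where "k5 = f 0 - c / k2"
  have ff: "f u = c / k2 * exp (k2 * u) + k5" for u using h[of u] unfolding k5_def by simp
  show ?thesis
  proof (cases "c = 0")
    case True
    then have "k5 \<noteq> 0" using nz ff by auto
    moreover have "\<forall>u. f u = k5" using ff True by simp
    ultimately show ?thesis by blast
  next
    case False
    then have c0: "c / k2 \<noteq> 0" using k2 by simp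
    show ?thesis
    proof (cases "k5 = 0")
      case True
      have "\<forall>u. f u = (c / k2) * exp (k2 * u)" using ff True by simp
      then show ?thesis using c0 k2 by blast
    next
      case False
      have "\<forall>u. f u = (c / k2) * exp (k2 * u) + k5" using ff by simp
      then show ?thesis using c0 False by blast
    qed
  qed
qed

theorem theorem1:
  fixes f :: "real \<Rightarrow> real" and k1 k2 :: real
  assumes "smooth1 f" and "\<exists>u. f u \<noteq> 0" and "k1 \<noteq> 0" and "k2 \<noteq> 0"
  shows
   "((\<exists>xi tau eta. lie_point_symmetry (fisher_cyl f (\<lambda>u. k1 * exp (k2 * u))) xi tau eta \<and>
        \<not> (\<exists>c. \<forall>x t u. x > 0 \<longrightarrow> xi x t u = 0 \<and> tau x t u = c \<and> eta x t u = 0))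
     \<longleftrightarrow>
     ((\<exists>k3 k4. k3 \<noteq> 0 \<and> k4 \<noteq> 0 \<and> (\<forall>u. f u = k3 * exp (k4 * u))) \<or>
      (\<exists>k3 k5. k3 \<noteq> 0 \<and> k5 \<noteq> 0 \<and> (\<forall>u. f u = k3 * exp (k2 * u) + k5)) \<or>
      (\<exists>k5. k5 \<noteq> 0 \<and> (\<forall>u. f u = k5))))
    \<and>
    (\<forall>k3 k4. k3 \<noteq> 0 \<longrightarrow> k4 \<noteq> 0 \<longrightarrow> (\<forall>u. f u = k3 * exp (k4 * u)) \<longrightarrow>
       lie_point_symmetry (fisher_cyl f (\<lambda>u. k1 * exp (k2 * u)))
          (\<lambda>x t u. 0) (\<lambda>x t u. 1) (\<lambda>x t u. 0) \<and>
       lie_point_symmetry (fisher_cyl f (\<lambda>u. k1 * exp (k2 * u)))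
          (\<lambda>x t u. (k4 - k2) * x) (\<lambda>x t u. 2 * k4 * t) (\<lambda>x t u. -2))
    \<and>
    (\<forall>k3 k5. k3 \<noteq> 0 \<longrightarrow> k5 \<noteq> 0 \<longrightarrow> (\<forall>u. f u = k3 * exp (k2 * u) + k5) \<longrightarrow>
       lie_point_symmetry (fisher_cyl f (\<lambda>u. k1 * exp (k2 * u)))
          (\<lambda>x t u. 0) (\<lambda>x t u. 1) (\<lambda>x t u. 0) \<and>
       lie_point_symmetry (fisher_cyl f (\<lambda>u. k1 * exp (k2 * u)))
          (\<lambda>x t u. 0) (\<lambda>x t u. exp (- k2 * k5 * t)) (\<lambda>x t u. k5 * exp (- k2 * k5 * t)))
    \<and>
    (\<forall>k5. k5 \<noteq> 0 \<longrightarrow> (\<forall>u. f u = k5) \<longrightarrow>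
       lie_point_symmetry (fisher_cyl f (\<lambda>u. k1 * exp (k2 * u)))
          (\<lambda>x t u. 0) (\<lambda>x t u. 1) (\<lambda>x t u. 0) \<and>
       lie_point_symmetry (fisher_cyl f (\<lambda>u. k1 * exp (k2 * u)))
          (\<lambda>x t u. 0) (\<lambda>x t u. exp (- k2 * k5 * t)) (\<lambda>x t u. k5 * exp (- k2 * k5 * t)) \<and>
       lie_point_symmetry (fisher_cyl f (\<lambda>u. k1 * exp (k2 * u)))
          (\<lambda>x t u. k2 * x) (\<lambda>x t u. 0) (\<lambda>x t u. 2))"
proof -
  note sf = assms(1) and nz = assms(2) and k1 = assms(3) and k2 = assms(4)
  have fd: "\<And>u. f differentiable (at u)" using smooth1_diff[OF sf] by blast
  have A: "lie_point_symmetry (fisher_cyl f (\<lambda>u. k1 * exp (k2 * u)))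
          (\<lambda>x t u. (k4 - k2) * x) (\<lambda>x t u. 2 * k4 * t) (\<lambda>x t u. -2)"
    if "\<forall>u. f u = k3 * exp (k4 * u)" for k3 k4
  proof -
    have "f = (\<lambda>u. k3 * exp (k4 * u))" using that by auto
    then show ?thesis using symA by simp
  qed
  have B: "lie_point_symmetry (fisher_cyl f (\<lambda>u. k1 * exp (k2 * u)))
          (\<lambda>x t u. 0) (\<lambda>x t u. exp (- k2 * k5 * t)) (\<lambda>x t u. k5 * exp (- k2 * k5 * t))"
    if "\<forall>u. f u = k3 * exp (k2 * u) + k5" for k3 k5
  proof -
    have "f = (\<lambda>u. k3 * exp (k2 * u) + k5)" using that by auto
    then show ?thesis using symB by simp
  qed
  have C1: "lie_point_symmetry (fisher_cyl f (\<lambda>u. k1 * exp (k2 * u)))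
          (\<lambda>x t u. 0) (\<lambda>x t u. exp (- k2 * k5 * t)) (\<lambda>x t u. k5 * exp (- k2 * k5 * t))"
   and C2: "lie_point_symmetry (fisher_cyl f (\<lambda>u. k1 * exp (k2 * u)))
          (\<lambda>x t u. k2 * x) (\<lambda>x t u. 0) (\<lambda>x t u. 2)"
    if "\<forall>u. f u = k5" for k5
  proof -
    have "f = (\<lambda>u. k5)" using that by auto
    then show "lie_point_symmetry (fisher_cyl f (\<lambda>u. k1 * exp (k2 * u)))
          (\<lambda>x t u. 0) (\<lambda>x t u. exp (- k2 * k5 * t)) (\<lambda>x t u. k5 * exp (- k2 * k5 * t))"
      using symC1 by simp
    show "lie_point_symmetry (fisher_cyl f (\<lambda>u. k1 * exp (k2 * u)))
          (\<lambda>x t u. k2 * x) (\<lambda>x t u. 0) (\<lambda>x t u. 2)"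
      using symC2 \<open>f = _\<close> by simp
  qed
  have T: "lie_point_symmetry (fisher_cyl f (\<lambda>u. k1 * exp (k2 * u))) (\<lambda>x t u. 0) (\<lambda>x t u. 1) (\<lambda>x t u. 0)"
    by (rule symT[OF fd])
  have ntE: "\<not> (\<exists>c. \<forall>(x::real) (t::real) (u::real). x > 0 \<longrightarrow> (0::real) = 0 \<and> exp (- k2 * k5 * t) = c \<and> k5 * exp (- k2 * k5 * t) = 0)"
    if "k5 \<noteq> 0" for k5
  proof
    assume "\<exists>c. \<forall>(x::real) (t::real) (u::real). x > 0 \<longrightarrow> (0::real) = 0 \<and> exp (- k2 * k5 * t) = c \<and> k5 * exp (- k2 * k5 * t) = 0"
    then show False
    proof (elim exE)
      fix c assume h: "\<forall>(x::real) (t::real) (u::real). x > 0 \<longrightarrow> (0::real) = 0 \<and> exp (- k2 * k5 * t) = c \<and> k5 * exp (- k2 * k5 * t) = 0"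
      show False using h[rule_format, of 1 0] that by simp
    qed
  qed
  have P1: "(\<exists>xi tau eta. lie_point_symmetry (fisher_cyl f (\<lambda>u. k1 * exp (k2 * u))) xi tau eta \<and>
        \<not> (\<exists>c. \<forall>x t u. x > 0 \<longrightarrow> xi x t u = 0 \<and> tau x t u = c \<and> eta x t u = 0))
     \<longleftrightarrow>
     ((\<exists>k3 k4. k3 \<noteq> 0 \<and> k4 \<noteq> 0 \<and> (\<forall>u. f u = k3 * exp (k4 * u))) \<or>
      (\<exists>k3 k5. k3 \<noteq> 0 \<and> k5 \<noteq> 0 \<and> (\<forall>u. f u = k3 * exp (k2 * u) + k5)) \<or>
      (\<exists>k5. k5 \<noteq> 0 \<and> (\<forall>u. f u = k5)))" (is "?L \<longleftrightarrow> ?R")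
  proof
    assume ?L
    then obtain xi tau eta where s: "lie_point_symmetry (fisher_cyl f (\<lambda>u. k1 * exp (k2 * u))) xi tau eta"
      and n: "\<not> (\<exists>c. \<forall>x t u. x > 0 \<longrightarrow> xi x t u = 0 \<and> tau x t u = c \<and> eta x t u = 0)" by blast
    show ?R
    proof (cases "\<exists>c. \<forall>u. deriv f u = c * exp (k2 * u)")
      case True
      then obtain c where c: "\<forall>u. deriv f u = c * exp (k2 * u)" by blast
      show ?thesis by (rule types[OF sf nz k2 c])
    next
      case False
      show ?thesis by (rule disjI1) (rule only_if[OF sf k1 k2 s n False])
    qed
  next
    assume ?R
    then show ?L
    proof (elim disjE exE conjE)
      fix k3 k4 assume "k3 \<noteq> 0" "k4 \<noteq> 0" and f: "\<forall>u. f u = k3 * exp (k4 * u)"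
      have ntA: "\<not> (\<exists>c. \<forall>x t (u::real). x > 0 \<longrightarrow> (k4 - k2) * x = 0 \<and> 2 * k4 * t = c \<and> (-2::real) = 0)"
      proof
        assume "\<exists>c. \<forall>x t (u::real). x > 0 \<longrightarrow> (k4 - k2) * x = 0 \<and> 2 * k4 * t = c \<and> (-2::real) = 0"
        then show False
        proof (elim exE)
          fix c assume h: "\<forall>x t (u::real). x > 0 \<longrightarrow> (k4 - k2) * x = 0 \<and> 2 * k4 * t = c \<and> (-2::real) = 0"
          show False using h[rule_format, of 1 0] by simp
        qed
      qed
      show ?L
        apply (rule exI, rule exI, rule exI, rule conjI)
         apply (rule A[OF f])
        by (rule ntA)
    next
      fix k3 k5 assume "k3 \<noteq> 0" "k5 \<noteq> 0" and f: "\<forall>u. f u = k3 * exp (k2 * u) + k5"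
      show ?L
        apply (rule exI, rule exI, rule exI, rule conjI)
         apply (rule B[OF f])
        by (rule ntE) fact
    next
      fix k5 assume "k5 \<noteq> 0" and f: "\<forall>u. f u = k5"
      show ?L
        apply (rule exI, rule exI, rule exI, rule conjI)
         apply (rule C1[OF f])
        by (rule ntE) fact
    qed
  qed
  show ?thesis
    by (intro conjI allI impI T P1; (rule A B C1 C2; assumption))
qed

end
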